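(* Let $G_H$ be a finite undirected multigraph (parallel edges allowed, no self-loops) with vertex set $V$ and edge set partitioned as $E = S \sqcup S^c$ into secure edges $S$ and insecure edges $S^c$, and let $0 < p_J^{S^c} \le p_J^{S} \le p_I$ be real costs satisfying $p_J^{S^c} \ge p_I/2$ and $p_J^{S} \ge p_I/2$. Consider the following two problems. (I-A) Find a cut $C^*$ of minimum cardinality among cuts $C$ with $n^S_C < |C|/2$; form the attack on $C^*$ that injects data into $\lfloor (1+|C^*|)/2\rfloor$ insecure edges of $C^*$, jams $(1 - (|C^*| \bmod 2))$ further insecure edges of $C^*$, and leaves all other edges untouched. (I-B) Give weight $p_J^{S}$ to secure edges and $p_I - p_J^{S}$ to insecure edges, and find a cut $C^*$ of minimum weight among cuts $C$ with $n^S_C \ge |C|/2$ and $n^{S^c}_C > 0$; form the attack on $C^*$ that injects data into all insecure edges of $C^*$ and jams $n^S_{C^*} + 1 - n^{S^c}_{C^*}$ secure edges of $C^*$. Then, among the attacks produced by those of the two problems that have a feasible solution, one of minimum cost is an optimal detectable generalized attack in $G_H$.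
   Context: For a nonempty proper subset $U \subsetneq V$, the cut $\delta(U)$ is the set of edges with exactly one endpoint in $U$; a cut of $G_H$ is any set of this form. For a cut $C$, $n^S_C = |C\cap S|$ and $n^{S^c}_C = |C \cap S^c|$. The costs are: $p_J^{S^c}$ per jammed insecure edge, $p_J^S$ per jammed secure edge, $p_I$ per insecure edge with injected data. A generalized attack is a triple $(C,J,I)$ where $C$ is a cut, $J \subseteq C$ is the set of jammed edges, and $I \subseteq (C \cap S^c)\setminus J$ is a nonempty set of injected edges; its cost is $p_J^{S}|J\cap S| + p_J^{S^c}|J \cap S^c| + p_I |I|$. The attack is detectable if $2|I| > |C \setminus J|$ (the injected edges form a strict majority of the non-jammed edges of the cut). An optimal detectable generalized attack is one of minimum cost among all detectable generalized attacks. *)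

theory Defs
  imports Complex_Main
begin

text \<open>Finite undirected multigraph: vertex set V, edge set E, each edge e has two
  distinct endpoints ep1 e and ep2 e (orientation irrelevant). Secure edges S \<subseteq> E,
  insecure edges E - S.\<close>

definition cut_of :: "'e set \<Rightarrow> ('e \<Rightarrow> 'v) \<Rightarrow> ('e \<Rightarrow> 'v) \<Rightarrow> 'v set \<Rightarrow> 'e set" where
  "cut_of E ep1 ep2 U = {e \<in> E. (ep1 e \<in> U) \<noteq> (ep2 e \<in> U)}"

definition is_cut :: "'v set \<Rightarrow> 'e set \<Rightarrow> ('e \<Rightarrow> 'v) \<Rightarrow> ('e \<Rightarrow> 'v) \<Rightarrow> 'e set \<Rightarrow> bool" where
  "is_cut V E ep1 ep2 C \<longleftrightarrow> (\<exists>U. U \<noteq> {} \<and> U \<subset> V \<and> C = cut_of E ep1 ep2 U)"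

type_synonym 'e attack = "'e set \<times> 'e set \<times> 'e set"

definition gen_attack ::
  "'v set \<Rightarrow> 'e set \<Rightarrow> ('e \<Rightarrow> 'v) \<Rightarrow> ('e \<Rightarrow> 'v) \<Rightarrow> 'e set \<Rightarrow> 'e attack \<Rightarrow> bool" where
  "gen_attack V E ep1 ep2 S a \<longleftrightarrow>
     (case a of (C, J, I) \<Rightarrow>
        is_cut V E ep1 ep2 C \<and> J \<subseteq> C \<and> I \<subseteq> (C \<inter> (E - S)) - J \<and> I \<noteq> {})"

definition attack_cost :: "'e set \<Rightarrow> 'e set \<Rightarrow> real \<Rightarrow> real \<Rightarrow> real \<Rightarrow> 'e attack \<Rightarrow> real" where
  "attack_cost E S pJS pJSc pI a =
     (case a of (C, J, I) \<Rightarrow>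
        pJS * real (card (J \<inter> S)) + pJSc * real (card (J \<inter> (E - S))) + pI * real (card I))"

definition detectable :: "'e attack \<Rightarrow> bool" where
  "detectable a \<longleftrightarrow> (case a of (C, J, I) \<Rightarrow> 2 * card I > card (C - J))"

definition optimal_detectable_attack ::
  "'v set \<Rightarrow> 'e set \<Rightarrow> ('e \<Rightarrow> 'v) \<Rightarrow> ('e \<Rightarrow> 'v) \<Rightarrow> 'e set \<Rightarrow> real \<Rightarrow> real \<Rightarrow> real
     \<Rightarrow> 'e attack \<Rightarrow> bool" where
  "optimal_detectable_attack V E ep1 ep2 S pJS pJSc pI a \<longleftrightarrow>
     gen_attack V E ep1 ep2 S a \<and> detectable a \<and>
     (\<forall>b. gen_attack V E ep1 ep2 S b \<and> detectable b \<longrightarrow>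
          attack_cost E S pJS pJSc pI a \<le> attack_cost E S pJS pJSc pI b)"

definition feasA :: "'v set \<Rightarrow> 'e set \<Rightarrow> ('e \<Rightarrow> 'v) \<Rightarrow> ('e \<Rightarrow> 'v) \<Rightarrow> 'e set \<Rightarrow> 'e set \<Rightarrow> bool" where
  "feasA V E ep1 ep2 S C \<longleftrightarrow> is_cut V E ep1 ep2 C \<and> 2 * card (C \<inter> S) < card C"

definition IA_output ::
  "'v set \<Rightarrow> 'e set \<Rightarrow> ('e \<Rightarrow> 'v) \<Rightarrow> ('e \<Rightarrow> 'v) \<Rightarrow> 'e set \<Rightarrow> 'e attack \<Rightarrow> bool" where
  "IA_output V E ep1 ep2 S a \<longleftrightarrow>
     (case a of (C, J, I) \<Rightarrow>
        feasA V E ep1 ep2 S C \<and>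
        (\<forall>C'. feasA V E ep1 ep2 S C' \<longrightarrow> card C \<le> card C') \<and>
        I \<subseteq> C \<inter> (E - S) \<and> card I = (1 + card C) div 2 \<and>
        J \<subseteq> C \<inter> (E - S) \<and> J \<inter> I = {} \<and> card J = 1 - card C mod 2)"

definition feasB :: "'v set \<Rightarrow> 'e set \<Rightarrow> ('e \<Rightarrow> 'v) \<Rightarrow> ('e \<Rightarrow> 'v) \<Rightarrow> 'e set \<Rightarrow> 'e set \<Rightarrow> bool" where
  "feasB V E ep1 ep2 S C \<longleftrightarrow> is_cut V E ep1 ep2 C \<and> card C \<le> 2 * card (C \<inter> S) \<and>
     card (C \<inter> (E - S)) > 0"

definition weightB :: "'e set \<Rightarrow> 'e set \<Rightarrow> real \<Rightarrow> real \<Rightarrow> 'e set \<Rightarrow> real" where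
  "weightB E S pJS pI C = pJS * real (card (C \<inter> S)) + (pI - pJS) * real (card (C \<inter> (E - S)))"

definition IB_output ::
  "'v set \<Rightarrow> 'e set \<Rightarrow> ('e \<Rightarrow> 'v) \<Rightarrow> ('e \<Rightarrow> 'v) \<Rightarrow> 'e set \<Rightarrow> real \<Rightarrow> real \<Rightarrow> 'e attack \<Rightarrow> bool" where
  "IB_output V E ep1 ep2 S pJS pI a \<longleftrightarrow>
     (case a of (C, J, I) \<Rightarrow>
        feasB V E ep1 ep2 S C \<and>
        (\<forall>C'. feasB V E ep1 ep2 S C' \<longrightarrow> weightB E S pJS pI C \<le> weightB E S pJS pI C') \<and>
        I = C \<inter> (E - S) \<and>
        J \<subseteq> C \<inter> S \<and>
        int (card J) = int (card (C \<inter> S)) + 1 - int (card (C \<inter> (E - S))))"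

end

theory Submission
  imports Defs
begin

lemma cut_sub: "is_cut V E ep1 ep2 C \<Longrightarrow> C \<subseteq> E"
  unfolding is_cut_def cut_of_def by auto

lemma attack_facts:
  assumes fE: "finite E" and ga: "gen_attack V E ep1 ep2 S (C,J,I)" and de: "detectable (C,J,I)"
  shows "finite C" "card (C\<inter>S) + card (C\<inter>(E-S)) = card C"
    "card (J\<inter>S) + card (J\<inter>(E-S)) = card J"
    "card I + card (J\<inter>(E-S)) \<le> card (C\<inter>(E-S))"
    "card C < 2*card I + card (J\<inter>S) + card (J\<inter>(E-S))"
    "card I > 0"
proof -
  have cut: "is_cut V E ep1 ep2 C" and JC: "J \<subseteq> C" and IC: "I \<subseteq> (C \<inter> (E - S)) - J"
    and In: "I \<noteq> {}" using ga unfolding gen_attack_def by auto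
  have CE: "C \<subseteq> E" using cut_sub[OF cut] .
  show fC: "finite C" using CE fE finite_subset by blast
  have fJ: "finite J" using JC fC finite_subset by blast
  have "card ((C\<inter>S) \<union> (C\<inter>(E-S))) = card (C\<inter>S) + card (C\<inter>(E-S))"
    by (rule card_Un_disjoint) (use fC in auto)
  moreover have "(C\<inter>S) \<union> (C\<inter>(E-S)) = C" using CE by auto
  ultimately show "card (C\<inter>S) + card (C\<inter>(E-S)) = card C" by simp
  have "card ((J\<inter>S) \<union> (J\<inter>(E-S))) = card (J\<inter>S) + card (J\<inter>(E-S))"
    by (rule card_Un_disjoint) (use fJ in auto)
  moreover have "(J\<inter>S) \<union> (J\<inter>(E-S)) = J" using CE JC by auto
  ultimately show cJ: "card (J\<inter>S) + card (J\<inter>(E-S)) = card J" by simp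
  have "card (I \<union> (J\<inter>(E-S))) = card I + card (J\<inter>(E-S))"
    by (rule card_Un_disjoint) (use fJ fC IC finite_subset[of I C] in auto)
  moreover have "card (I \<union> (J\<inter>(E-S))) \<le> card (C\<inter>(E-S))"
    by (rule card_mono) (use fC IC JC in auto)
  ultimately show "card I + card (J\<inter>(E-S)) \<le> card (C\<inter>(E-S))" by simp
  have "card (C - J) = card C - card J" using card_Diff_subset[OF fJ JC] .
  moreover have "card J \<le> card C" using card_mono[OF fC JC] .
  moreover have "card (C - J) < 2 * card I" using de unfolding detectable_def by simp
  ultimately show "card C < 2*card I + card (J\<inter>S) + card (J\<inter>(E-S))" using cJ by linarith
  have "I \<subseteq> C" using IC by blast
  hence "finite I" using fC finite_subset by blast
  then show "card I > 0" using In by auto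
qed

lemma IA_good:
  assumes fE: "finite E" and o: "IA_output V E ep1 ep2 S a"
  shows "gen_attack V E ep1 ep2 S a" "detectable a"
    "attack_cost E S pJS pJSc pI a = pI * real ((1 + card (fst a)) div 2) + pJSc * real (1 - card (fst a) mod 2)"
proof -
  obtain C J I where a: "a = (C,J,I)" by (cases a) auto
  have f: "feasA V E ep1 ep2 S C" and IC: "I \<subseteq> C \<inter> (E - S)" and cI: "card I = (1 + card C) div 2"
    and JC: "J \<subseteq> C \<inter> (E - S)" and JI: "J \<inter> I = {}" and cJ: "card J = 1 - card C mod 2"
    using o unfolding IA_output_def a by auto
  have cut: "is_cut V E ep1 ep2 C" and lt: "2 * card (C \<inter> S) < card C" using f unfolding feasA_def by auto
  have fC: "finite C" using cut_sub[OF cut] fE finite_subset by blast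
  have "card I > 0" using cI lt by auto
  hence "I \<noteq> {}" by auto
  then show "gen_attack V E ep1 ep2 S a" unfolding gen_attack_def a using cut IC JC JI by auto
  have "card (C - J) = card C - card J" using card_Diff_subset[OF finite_subset[OF _ fC] ] JC by auto
  then show "detectable a" proof -
    have "card C > 0" using lt by linarith
    then have "card C - (1 - card C mod 2) < 2 * ((1 + card C) div 2)"
    proof (cases "even (card C)")
      case True
      then obtain k where "card C = 2*k" by blast
      then show ?thesis using \<open>card C > 0\<close> by simp
    next
      case False
      then obtain k where "card C = 2*k+1" using oddE by blast
      then show ?thesis by simp
    qed
    with \<open>card (C - J) = card C - card J\<close> show ?thesis using cI cJ unfolding detectable_def a by simp
  qed
  have "J \<inter> S = {}" using JC by auto
  moreover have "J \<inter> (E - S) = J" using JC by auto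
  ultimately show "attack_cost E S pJS pJSc pI a = pI * real ((1 + card (fst a)) div 2) + pJSc * real (1 - card (fst a) mod 2)"
    unfolding attack_cost_def a using cI cJ by (simp add: algebra_simps)
qed

lemma IB_good:
  assumes fE: "finite E" and o: "IB_output V E ep1 ep2 S pJS pI b"
  shows "gen_attack V E ep1 ep2 S b" "detectable b"
    "attack_cost E S pJS pJSc pI b = pJS + weightB E S pJS pI (fst b)"
proof -
  obtain C J I where b: "b = (C,J,I)" by (cases b) auto
  have f: "feasB V E ep1 ep2 S C" and I: "I = C \<inter> (E - S)"
    and JC: "J \<subseteq> C \<inter> S" and cJ: "int (card J) = int (card (C \<inter> S)) + 1 - int (card (C \<inter> (E - S)))"
    using o unfolding IB_output_def b by auto
  have cut: "is_cut V E ep1 ep2 C" and le: "card C \<le> 2 * card (C \<inter> S)" and pos: "card (C \<inter> (E - S)) > 0"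
    using f unfolding feasB_def by auto
  have fC: "finite C" using cut_sub[OF cut] fE finite_subset by blast
  have "I \<noteq> {}" using pos I by auto
  then show "gen_attack V E ep1 ep2 S b" unfolding gen_attack_def b using cut I JC by auto
  have CE: "C \<subseteq> E" using cut_sub[OF cut] .
  have "card ((C\<inter>S) \<union> (C\<inter>(E-S))) = card (C\<inter>S) + card (C\<inter>(E-S))"
    by (rule card_Un_disjoint) (use fC in auto)
  moreover have "(C\<inter>S) \<union> (C\<inter>(E-S)) = C" using CE by auto
  ultimately have cC: "card (C\<inter>S) + card (C\<inter>(E-S)) = card C" by simp
  have "card (C - J) = card C - card J" using card_Diff_subset[OF finite_subset[OF _ fC] ] JC by auto
  moreover have "card J \<le> card C" using JC fC by (meson card_mono inf_le1 subset_trans)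
  ultimately have "int (card (C - J)) = int (card C) - int (card J)" by simp
  then have "int (card (C - J)) = 2 * int (card I) - 1" using cJ cC I by simp
  then show "detectable b" unfolding detectable_def b by simp
  have "J \<inter> S = J" using JC by auto
  moreover have "J \<inter> (E - S) = {}" using JC by auto
  moreover have rj: "real (card J) = real (card (C \<inter> S)) + 1 - real (card (C \<inter> (E - S)))"
    using arg_cong[OF cJ, of real_of_int] by simp
  moreover have "pJS * real (card J) = pJS * (real (card (C \<inter> S)) + 1 - real (card (C \<inter> (E - S))))"
    using rj by simp
  ultimately show "attack_cost E S pJS pJSc pI b = pJS + weightB E S pJS pI (fst b)"
    unfolding attack_cost_def weightB_def b using I by (simp add: algebra_simps)
qed

lemma arithA:
  fixes pI pJSc :: real and n m i j :: nat
  assumes "n \<le> m" "m < 2*i + j" "pI/2 \<le> pJSc" "pJSc \<le> pI" "0 < pJSc"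
  shows "pI * real ((1 + n) div 2) + pJSc * real (1 - n mod 2) \<le> pJSc * real j + pI * real i"
proof -
  have pI: "0 \<le> pI" using assms by linarith
  have hj: "pI/2 * real j \<le> pJSc * real j" using mult_right_mono[OF assms(3), of "real j"] by simp
  show ?thesis
  proof (cases "even n")
    case True
    then obtain k where n: "n = 2*k" by auto
    have d: "(1 + n) div 2 = k" "1 - n mod 2 = 1" using n by auto
    show ?thesis
    proof (cases "j = 0")
      case True
      then have "k + 1 \<le> i" using assms n by auto
      then have "pI * real (k+1) \<le> pI * real i" using pI by (simp add: mult_left_mono)
      then show ?thesis using d True assms by (simp add: algebra_simps)
    next
      case False
      then have "2*k + 1 \<le> 2*i + j" using assms n by auto
      then have "real (2*k + 1) \<le> real (2*i + j)" by (simp only: of_nat_le_iff)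
      then have r: "real (2*k) \<le> 2*real i + (real j - 1)" by simp
      have "pI/2 * real (2*k) \<le> pI/2 * (2*real i + (real j - 1))"
        by (rule mult_left_mono[OF r]) (use pI in simp)
      moreover have "pI/2 * (real j - 1) \<le> pJSc * (real j - 1)"
        by (rule mult_right_mono[OF assms(3)]) (use False in simp)
      ultimately show ?thesis using d by (simp add: algebra_simps) (simp add: field_simps)
    qed
  next
    case False
    then obtain k where n: "n = 2*k+1" using oddE by blast
    have d: "(1 + n) div 2 = k+1" "1 - n mod 2 = 0" using n by auto
    have "real (2*k+2) \<le> 2*real i + real j" using assms n by linarith
    then have "pI/2 * real (2*k+2) \<le> pI/2 * (2*real i + real j)" using pI by (simp add: mult_left_mono)
    then show ?thesis using d hj by (simp add: algebra_simps)
  qed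
qed



lemma arithB:
  fixes pI pJS pJSc :: real and nS nSc js jc i :: nat
  assumes "i + jc \<le> nSc" "nS + nSc < 2*i + js + jc" "pI \<le> pJSc + pJS" "pI \<le> 2*pJS" "0 \<le> pJS"
  shows "pJS + (pJS * real nS + (pI - pJS) * real nSc) \<le> pJS * real js + pJSc * real jc + pI * real i"
proof -
  have r1: "real nS + real nSc + 1 - 2*real i - real jc \<le> real js" using assms(2) by linarith
  have h1: "pJS * (real nS + real nSc + 1 - 2*real i - real jc) \<le> pJS * real js"
    using mult_left_mono[OF r1 assms(5)] .
  have h2: "0 \<le> (2*pJS - pI)*(real nSc - real i - real jc)" using assms(1,4) by simp
  have h3: "0 \<le> (pJSc + pJS - pI)*real jc" using assms(3) by simp
  show ?thesis using h1 h2 h3 by (simp add: algebra_simps)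
qed

theorem theorem5:
  fixes V :: "'v set" and E S :: "'e set" and ep1 ep2 :: "'e \<Rightarrow> 'v"
    and pJS pJSc pI :: real and a b x :: "'e attack"
  assumes "finite V" and "finite E"
    and "\<forall>e\<in>E. ep1 e \<in> V \<and> ep2 e \<in> V \<and> ep1 e \<noteq> ep2 e"
    and "S \<subseteq> E"
    and "0 < pJSc" and "pJSc \<le> pJS" and "pJS \<le> pI"
    and "pJSc \<ge> pI / 2" and "pJS \<ge> pI / 2"
    and "(\<exists>C. feasA V E ep1 ep2 S C) \<Longrightarrow> IA_output V E ep1 ep2 S a"
    and "(\<exists>C. feasB V E ep1 ep2 S C) \<Longrightarrow> IB_output V E ep1 ep2 S pJS pI b"
    and "((\<exists>C. feasA V E ep1 ep2 S C) \<and> x = a) \<or> ((\<exists>C. feasB V E ep1 ep2 S C) \<and> x = b)"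
    and "(\<exists>C. feasA V E ep1 ep2 S C) \<Longrightarrow> attack_cost E S pJS pJSc pI x \<le> attack_cost E S pJS pJSc pI a"
    and "(\<exists>C. feasB V E ep1 ep2 S C) \<Longrightarrow> attack_cost E S pJS pJSc pI x \<le> attack_cost E S pJS pJSc pI b"
  shows "optimal_detectable_attack V E ep1 ep2 S pJS pJSc pI x"
  proof -
  note as = assms
  have pos: "0 \<le> pJS" using as by linarith
  have gx: "gen_attack V E ep1 ep2 S x \<and> detectable x"
    using as(12) IA_good[OF as(2) as(10)] IB_good[OF as(2) as(11)] by blast
  have opt: "attack_cost E S pJS pJSc pI x \<le> attack_cost E S pJS pJSc pI c"
    if gc: "gen_attack V E ep1 ep2 S c" and dc: "detectable c" for c
  proof -
    obtain C J I where c: "c = (C,J,I)" by (cases c) auto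
    note F = attack_facts[OF as(2) gc[unfolded c] dc[unfolded c]]
    have cut: "is_cut V E ep1 ep2 C" using gc unfolding c gen_attack_def by auto
    have cc: "attack_cost E S pJS pJSc pI c = pJS * real (card (J\<inter>S)) + pJSc * real (card (J\<inter>(E-S))) + pI * real (card I)"
      unfolding c attack_cost_def by simp
    show ?thesis
    proof (cases "feasA V E ep1 ep2 S C")
      case True
      hence ex: "\<exists>C. feasA V E ep1 ep2 S C" by blast
      have oa: "IA_output V E ep1 ep2 S a" using as(10) ex .
      have le: "card (fst a) \<le> card C" using oa True unfolding IA_output_def
        by (cases a) auto
      have "attack_cost E S pJS pJSc pI a \<le> pJSc * real (card (J\<inter>S) + card (J\<inter>(E-S))) + pI * real (card I)"
        unfolding IA_good(3)[OF as(2) oa]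
        by (rule arithA) (use le F as in auto)
      moreover have "pJSc * real (card (J\<inter>S)) \<le> pJS * real (card (J\<inter>S))"
        using as(6) by (simp add: mult_right_mono)
      ultimately show ?thesis using as(13)[OF ex] cc by (simp add: algebra_simps)
    next
      case False
      hence fb: "feasB V E ep1 ep2 S C" using cut F unfolding feasA_def feasB_def by auto
      hence ex: "\<exists>C. feasB V E ep1 ep2 S C" by blast
      have ob: "IB_output V E ep1 ep2 S pJS pI b" using as(11) ex .
      have le: "weightB E S pJS pI (fst b) \<le> weightB E S pJS pI C" using ob fb unfolding IB_output_def
        by (cases b) auto
      have "pJS + weightB E S pJS pI C \<le> attack_cost E S pJS pJSc pI c"
        unfolding cc weightB_def
        by (rule arithB) (use F as in auto)
      then show ?thesis using as(14)[OF ex] IB_good(3)[where pJSc=pJSc, OF as(2) ob] le by linarith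
    qed
  qed
  show ?thesis unfolding optimal_detectable_attack_def using gx opt by blast
qed

end
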